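(* Let $I_n:=\iint_T \frac{(-\ln xy)^n}{xy}\,dx\,dy$. The series $\sum_{n=0}^\infty(-1)^n\frac{I_n}{n!}$ diverges, but it is Abel summable to $1/2$, i.e. $\lim_{t\to1^-}\sum_{n=0}^\infty(-1)^n\frac{I_n}{n!}t^n=\frac12$.
   Context: $T:=\{(x,y)\in[0,1]^2 : x+y\ge 1\}$. *)

theory Defs
  imports "HOL-Analysis.Analysis"
begin

definition T_region :: "(real \<times> real) set" where
  "T_region = {(x, y). 0 \<le> x \<and> x \<le> 1 \<and> 0 \<le> y \<and> y \<le> 1 \<and> x + y \<ge> 1}"

definition I_int :: "nat \<Rightarrow> real" where
  "I_int n = (LINT p:T_region|lborel. (- ln (fst p * snd p)) ^ n / (fst p * snd p))"

end

theory Submission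
  imports Defs
begin


lemma T_closed: "closed T_region"
proof -
  have "T_region = {p. 0 \<le> fst p} \<inter> {p. fst p \<le> 1} \<inter> {p. 0 \<le> snd p} \<inter> {p. snd p \<le> 1} \<inter> {p. 1 \<le> fst p + snd p}"
    by (auto simp: T_region_def)
  also have "closed \<dots>"
    by (intro closed_Int closed_Collect_le continuous_intros)
  finally show ?thesis .
qed

lemma T_meas[measurable]: "T_region \<in> sets borel"
  using T_closed by simp

lemma T_meas2[measurable]: "T_region \<in> sets (lborel \<Otimes>\<^sub>M lborel)"
  unfolding lborel_prod using T_meas by simp

lemma nn_powr_01:
  fixes a b :: real assumes "a > -1" "b \<ge> 0"
  shows "(\<integral>\<^sup>+y. indicator {0..b} y * ennreal (y powr a) \<partial>lborel) = ennreal (b powr (a+1) / (a+1))"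
proof -
  have "(\<integral>\<^sup>+y. ennreal (indicator {0..b} y * (y powr a)) \<partial>lborel) = ennreal (b powr (a+1) / (a+1))"
    by (rule nn_integral_has_integral_lebesgue) (auto intro: has_integral_powr_from_0 assms)
  moreover have "\<And>y. indicator {0..b} y * ennreal (y powr a) = ennreal (indicator {0..b} y * (y powr a))"
    by (simp add: indicator_def)
  ultimately show ?thesis by simp
qed

lemma T_snd:
  fixes g :: "real \<Rightarrow> ennreal"
  assumes [measurable]: "g \<in> borel_measurable borel"
  shows "(\<integral>\<^sup>+p. indicator T_region p * g (snd p) \<partial>lborel) = (\<integral>\<^sup>+y. indicator {0..1} y * ennreal y * g y \<partial>lborel)"
proof -
  have "(\<integral>\<^sup>+p. indicator T_region p * g (snd p) \<partial>lborel) =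
     (\<integral>\<^sup>+p. indicator T_region p * g (snd p) \<partial>(lborel \<Otimes>\<^sub>M lborel))"
    by (simp add: lborel_prod)
  also have "\<dots> = (\<integral>\<^sup>+y. (\<integral>\<^sup>+x. indicator T_region (x,y) * g y \<partial>lborel) \<partial>lborel)"
  proof (subst lborel_pair.nn_integral_snd[symmetric])
    show "(\<lambda>p. indicator T_region p * g (snd p)) \<in> borel_measurable (lborel \<Otimes>\<^sub>M lborel)"
      by measurable
  qed simp
  also have "\<dots> = (\<integral>\<^sup>+y. indicator {0..1} y * ennreal y * g y \<partial>lborel)"
  proof (rule nn_integral_cong)
    fix y :: real
    have e: "\<And>x. indicator T_region (x,y) * g y = g y * indicator ({0..1} \<inter> {1-y..1}) x * indicator {0..1} y"
      by (auto simp: T_region_def indicator_def)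
    have "(\<integral>\<^sup>+x. indicator T_region (x,y) * g y \<partial>lborel) = g y * indicator {0..1} y * emeasure lborel ({0..1} \<inter> {1-y..1})"
      unfolding e by (simp add: nn_integral_cmult nn_integral_multc mult.assoc mult.commute mult.left_commute)
    also have "\<dots> = indicator {0..1} y * ennreal y * g y"
      by (cases "0 \<le> y \<and> y \<le> 1") (auto simp: indicator_def max_def mult.commute)
    finally show "(\<integral>\<^sup>+x. indicator T_region (x,y) * g y \<partial>lborel) = indicator {0..1} y * ennreal y * g y" .
  qed
  finally show ?thesis .
qed

lemma T_fst:
  fixes g :: "real \<Rightarrow> ennreal"
  assumes [measurable]: "g \<in> borel_measurable borel"
  shows "(\<integral>\<^sup>+p. indicator T_region p * g (fst p) \<partial>lborel) = (\<integral>\<^sup>+y. indicator {0..1} y * ennreal y * g y \<partial>lborel)"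
proof -
  have "(\<integral>\<^sup>+p. indicator T_region p * g (fst p) \<partial>lborel) =
     (\<integral>\<^sup>+p. indicator T_region p * g (fst p) \<partial>(lborel \<Otimes>\<^sub>M lborel))"
    by (simp add: lborel_prod)
  also have "\<dots> = (\<integral>\<^sup>+x. (\<integral>\<^sup>+y. indicator T_region (x,y) * g x \<partial>lborel) \<partial>lborel)"
  proof (subst lborel.nn_integral_fst[symmetric])
    show "(\<lambda>p. indicator T_region p * g (fst p)) \<in> borel_measurable (lborel \<Otimes>\<^sub>M lborel)"
      by measurable
  qed simp
  also have "\<dots> = (\<integral>\<^sup>+y. indicator {0..1} y * ennreal y * g y \<partial>lborel)"
  proof (rule nn_integral_cong)
    fix x :: real
    have e: "\<And>y. indicator T_region (x,y) * g x = g x * indicator ({0..1} \<inter> {1-x..1}) y * indicator {0..1} x"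
      by (auto simp: T_region_def indicator_def)
    have "(\<integral>\<^sup>+y. indicator T_region (x,y) * g x \<partial>lborel) = g x * indicator {0..1} x * emeasure lborel ({0..1} \<inter> {1-x..1})"
      unfolding e by (simp add: nn_integral_cmult nn_integral_multc mult.assoc mult.commute mult.left_commute)
    also have "\<dots> = indicator {0..1} x * ennreal x * g x"
      by (cases "0 \<le> x \<and> x \<le> 1") (auto simp: indicator_def max_def mult.commute)
    finally show "(\<integral>\<^sup>+y. indicator T_region (x,y) * g x \<partial>lborel) = indicator {0..1} x * ennreal x * g x" .
  qed
  finally show ?thesis .
qed

lemma nn_y_pow:
  fixes a :: real assumes "a < 2"
  shows "(\<integral>\<^sup>+y. indicator {0..1} y * ennreal y * ennreal (y powr (-a)) \<partial>lborel) = ennreal (1 / (2 - a))"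
proof -
  have "(\<integral>\<^sup>+y. indicator {0..1} y * ennreal y * ennreal (y powr (-a)) \<partial>lborel)
     = (\<integral>\<^sup>+y. indicator {0..1} y * ennreal (y powr (1-a)) \<partial>lborel)"
  proof (rule nn_integral_cong)
    fix y :: real
    show "indicator {0..1} y * ennreal y * ennreal (y powr (-a)) = indicator {0..1} y * ennreal (y powr (1-a))"
    proof (cases "0 < y \<and> y \<le> 1")
      case True
      then have "y * y powr (-a) = y powr (1-a)"
        using True powr_add[of y 1 "-a"] by simp
      then have "ennreal y * ennreal (y powr (-a)) = ennreal (y powr (1-a))"
        using True by (subst ennreal_mult[symmetric]) auto
      then show ?thesis using True by (simp add: indicator_def mult.assoc)
    qed (auto simp: indicator_def)
  qed
  also have "\<dots> = ennreal (1 powr (1 - a + 1) / (1 - a + 1))"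
    by (rule nn_powr_01) (use assms in auto)
  finally show ?thesis by simp
qed

lemma nn_y_pow_half:
  fixes a :: real assumes "a < 2"
  shows "(\<integral>\<^sup>+y. indicator {0..1} y * ennreal y * (indicator {..1/2} y * ennreal (y powr (-a))) \<partial>lborel)
     = ennreal ((1/2) powr (2 - a) / (2 - a))"
proof -
  have "(\<integral>\<^sup>+y. indicator {0..1} y * ennreal y * (indicator {..1/2} y * ennreal (y powr (-a))) \<partial>lborel)
     = (\<integral>\<^sup>+y. indicator {0..1/2} y * ennreal (y powr (1-a)) \<partial>lborel)"
  proof (rule nn_integral_cong)
    fix y :: real
    show "indicator {0..1} y * ennreal y * (indicator {..1/2} y * ennreal (y powr (-a))) = indicator {0..1/2} y * ennreal (y powr (1-a))"
    proof (cases "0 < y \<and> y \<le> 1/2")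
      case True
      then have "y * y powr (-a) = y powr (1-a)"
        using True powr_add[of y 1 "-a"] by simp
      then have "ennreal y * ennreal (y powr (-a)) = ennreal (y powr (1-a))"
        using True by (subst ennreal_mult[symmetric]) auto
      then show ?thesis using True by (simp add: indicator_def mult.assoc)
    qed (auto simp: indicator_def)
  qed
  also have "\<dots> = ennreal ((1/2) powr (1 - a + 1) / (1 - a + 1))"
    by (rule nn_powr_01) (use assms in auto)
  finally show ?thesis by simp
qed

lemma half_powr: "0 \<le> (y::real) \<Longrightarrow> (y/2) powr (-a) = 2 powr a * y powr (-a)"
proof -
  have "(y/2) powr (-a) = y powr (-a) / 2 powr (-a)" by (rule powr_divide)
  also have "2 powr (-a) = inverse (2 powr a)" by (rule powr_minus)
  finally show ?thesis by (simp only: divide_inverse inverse_inverse_eq mult.commute)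
qed

lemma pw_upper:
  fixes x y a :: real
  assumes "(x,y) \<in> T_region" "0 \<le> a"
  shows "(x*y) powr (-a) \<le> 2 powr a * (x powr (-a) + y powr (-a))"
proof (cases "x*y = 0")
  case True
  then have "(x*y) powr (-a) = 0" by simp
  moreover have "0 \<le> 2 powr a * (x powr (-a) + y powr (-a))"
    by (intro mult_nonneg_nonneg add_nonneg_nonneg powr_ge_zero)
  ultimately show ?thesis by linarith
next
  case False
  from assms(1) have x0: "0 \<le> x" and y0: "0 \<le> y" and s: "x + y \<ge> 1"
    by (simp_all add: T_region_def)
  from False have "x \<noteq> 0" "y \<noteq> 0" by auto
  with x0 y0 have x: "0 < x" and y: "0 < y" by linarith+
  have na: "-a \<le> 0" using assms(2) by simp
  show ?thesis
  proof (cases "y \<le> x")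
    case True
    then have "x \<ge> 1/2" using s by linarith
    then have "(1/2) * y \<le> x*y" by (rule mult_right_mono) (use y in linarith)
    then have yxy: "y/2 \<le> x*y" by simp
    have "(x*y) powr (-a) \<le> (y/2) powr (-a)"
      by (rule powr_mono2'[OF na _ yxy]) (use y in linarith)
    also have "\<dots> = 2 powr a * y powr (-a)"
      using y by (simp add: half_powr)
    also have "\<dots> \<le> 2 powr a * (x powr (-a) + y powr (-a))"
      by (intro mult_left_mono add_increasing order_refl powr_ge_zero)
    finally show ?thesis .
  next
    case False
    then have "y \<ge> 1/2" using s by linarith
    then have "x * (1/2) \<le> x*y" by (rule mult_left_mono) (use x in linarith)
    then have yxy: "x/2 \<le> x*y" by simp
    have "(x*y) powr (-a) \<le> (x/2) powr (-a)"
      by (rule powr_mono2'[OF na _ yxy]) (use x in linarith)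
    also have "\<dots> = 2 powr a * x powr (-a)"
      using x by (simp add: half_powr)
    also have "\<dots> \<le> 2 powr a * (x powr (-a) + y powr (-a))"
      by (intro mult_left_mono add_increasing2 order_refl powr_ge_zero)
    finally show ?thesis .
  qed
qed

lemma meas_pow_fst: "(\<lambda>p::real\<times>real. ennreal (2 powr a) * (indicator T_region p * ennreal (fst p powr (-a)))) \<in> borel_measurable lborel"
  unfolding lborel_prod[symmetric] by measurable

lemma meas_pow_snd: "(\<lambda>p::real\<times>real. ennreal (2 powr a) * (indicator T_region p * ennreal (snd p powr (-a)))) \<in> borel_measurable lborel"
  unfolding lborel_prod[symmetric] by measurable

lemma pw_upper_enn:
  fixes a :: real assumes a: "0 \<le> a"
  shows "indicator T_region p * ennreal ((fst p * snd p) powr (-a)) \<le>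
      ennreal (2 powr a) * (indicator T_region p * ennreal (fst p powr (-a)))
          + ennreal (2 powr a) * (indicator T_region p * ennreal (snd p powr (-a)))"
proof (cases "p \<in> T_region")
  case True
  obtain x y where p: "p = (x,y)" by (cases p)
  have T: "(x,y) \<in> T_region" using True p by simp
  have "ennreal ((x*y) powr (-a)) \<le> ennreal (2 powr a * (x powr (-a) + y powr (-a)))"
    by (rule ennreal_leI[OF pw_upper[OF T a]])
  also have "\<dots> = ennreal (2 powr a) * ennreal (x powr (-a) + y powr (-a))"
    by (intro ennreal_mult powr_ge_zero add_nonneg_nonneg)
  also have "\<dots> = ennreal (2 powr a) * (ennreal (x powr (-a)) + ennreal (y powr (-a)))"
    by (simp only: ennreal_plus[OF powr_ge_zero powr_ge_zero])
  also have "\<dots> = ennreal (2 powr a) * ennreal (x powr (-a)) + ennreal (2 powr a) * ennreal (y powr (-a))"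
    by (rule distrib_left)
  finally have *: "ennreal ((x*y) powr (-a)) \<le> ennreal (2 powr a) * ennreal (x powr (-a)) + ennreal (2 powr a) * ennreal (y powr (-a))" .
  have i: "indicator T_region (x,y) = (1::ennreal)" using T by simp
  show ?thesis unfolding p i fst_conv snd_conv mult_1 using * .
next
  case False
  then have i: "indicator T_region p = (0::ennreal)" by simp
  show ?thesis unfolding i by simp
qed

lemma nn_T_pow_le:
  fixes a :: real assumes a: "0 \<le> a" "a < 2"
  shows "(\<integral>\<^sup>+p. indicator T_region p * ennreal ((fst p * snd p) powr (-a)) \<partial>lborel)
     \<le> ennreal (2 powr a) * (ennreal (1/(2-a)) + ennreal (1/(2-a)))"
proof -
  have mf: "(\<lambda>y. ennreal (y powr (-a))) \<in> borel_measurable borel" by measurable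
  have "(\<integral>\<^sup>+p. indicator T_region p * ennreal ((fst p * snd p) powr (-a)) \<partial>lborel)
     \<le> (\<integral>\<^sup>+p. ennreal (2 powr a) * (indicator T_region p * ennreal (fst p powr (-a)))
          + ennreal (2 powr a) * (indicator T_region p * ennreal (snd p powr (-a))) \<partial>lborel)"
    by (rule nn_integral_mono) (rule pw_upper_enn[OF a(1)])
  also have "\<dots> = (\<integral>\<^sup>+p. ennreal (2 powr a) * (indicator T_region p * ennreal (fst p powr (-a))) \<partial>lborel)
      + (\<integral>\<^sup>+p. ennreal (2 powr a) * (indicator T_region p * ennreal (snd p powr (-a))) \<partial>lborel)"
    by (rule nn_integral_add[OF meas_pow_fst meas_pow_snd])
  also have "\<dots> = ennreal (2 powr a) * (\<integral>\<^sup>+p. indicator T_region p * ennreal (fst p powr (-a)) \<partial>lborel)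
      + ennreal (2 powr a) * (\<integral>\<^sup>+p. indicator T_region p * ennreal (snd p powr (-a)) \<partial>lborel)"
  proof -
    have m1: "(\<lambda>p::real\<times>real. indicator T_region p * ennreal (fst p powr (-a))) \<in> borel_measurable lborel"
      unfolding lborel_prod[symmetric] by measurable
    have m2: "(\<lambda>p::real\<times>real. indicator T_region p * ennreal (snd p powr (-a))) \<in> borel_measurable lborel"
      unfolding lborel_prod[symmetric] by measurable
    show ?thesis by (simp only: nn_integral_cmult[OF m1] nn_integral_cmult[OF m2])
  qed
  also have "\<dots> = ennreal (2 powr a) * (ennreal (1/(2-a)) + ennreal (1/(2-a)))"
    unfolding T_fst[OF mf] T_snd[OF mf] nn_y_pow[OF a(2)] by (rule distrib_left[symmetric])
  finally show ?thesis .
qed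

lemma T_pow_integrable:
  fixes a :: real assumes a: "0 \<le> a" "a < 2"
  shows "integrable lborel (\<lambda>p. indicator T_region p * (fst p * snd p) powr (-a))"
proof (subst integrable_iff_bounded, intro conjI)
  show "(\<lambda>p. indicator T_region p * (fst p * snd p) powr (-a)) \<in> borel_measurable lborel"
    unfolding lborel_prod[symmetric] by measurable
  have "(\<integral>\<^sup>+p. ennreal (norm (indicator T_region p * (fst p * snd p) powr (-a))) \<partial>lborel)
     = (\<integral>\<^sup>+p. indicator T_region p * ennreal ((fst p * snd p) powr (-a)) \<partial>lborel)"
  proof (rule nn_integral_cong)
    fix p :: "real \<times> real"
    have "norm (indicator T_region p * (fst p * snd p) powr (-a)) = indicator T_region p * (fst p * snd p) powr (-a)"
      by (intro real_norm_def[THEN trans] abs_of_nonneg mult_nonneg_nonneg powr_ge_zero) simp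
    then show "ennreal (norm (indicator T_region p * (fst p * snd p) powr (-a))) = indicator T_region p * ennreal ((fst p * snd p) powr (-a))"
      by (cases "p \<in> T_region") simp_all
  qed
  also have "\<dots> < \<infinity>"
    using nn_T_pow_le[OF a] by (rule le_less_trans) (simp add: ennreal_mult_less_top)
  finally show "(\<integral>\<^sup>+p. ennreal (norm (indicator T_region p * (fst p * snd p) powr (-a))) \<partial>lborel) < \<infinity>" .
qed


definition gg :: "nat \<Rightarrow> real \<times> real \<Rightarrow> real" where
  "gg n p = indicator T_region p * ((- ln (fst p * snd p)) ^ n / (fst p * snd p))"

lemma I_int_gg: "I_int n = integral\<^sup>L lborel (gg n)"
  unfolding I_int_def set_lebesgue_integral_def gg_def by simp

lemma T_u: assumes "p \<in> T_region" shows "0 \<le> fst p * snd p" "fst p * snd p \<le> 1"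
proof -
  from assms have "0 \<le> fst p" "fst p \<le> 1" "0 \<le> snd p" "snd p \<le> 1"
    by (auto simp: T_region_def)
  then show "0 \<le> fst p * snd p" "fst p * snd p \<le> 1"
    by (simp_all add: mult_le_one)
qed

lemma T_nln: assumes "p \<in> T_region" shows "0 \<le> - ln (fst p * snd p)"
proof (cases "fst p * snd p = 0")
  case True
  have "ln (fst p * snd p) = 0" unfolding True by simp
  then show ?thesis by simp
next
  case False
  with T_u[OF assms] have "0 < fst p * snd p" by linarith
  with T_u(2)[OF assms] show ?thesis by simp
qed

lemma gg_nonneg: "0 \<le> gg n p"
proof (cases "p \<in> T_region")
  case True
  have "0 \<le> (- ln (fst p * snd p)) ^ n / (fst p * snd p)"
    by (intro divide_nonneg_nonneg zero_le_power T_nln[OF True] T_u(1)[OF True])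
  then show ?thesis using True by (simp add: gg_def)
qed (simp add: gg_def)

lemma pw_sums:
  fixes s :: real
  shows "(\<lambda>n. s ^ n / fact n * gg n p) sums (indicator T_region p * ((fst p * snd p) powr (-s) / (fst p * snd p)))"
proof (cases "p \<in> T_region \<and> fst p * snd p \<noteq> 0")
  case False
  then have e1: "(\<lambda>n. s ^ n / fact n * gg n p) = (\<lambda>n. 0)" by (auto simp: gg_def)
  have e2: "indicator T_region p * ((fst p * snd p) powr (-s) / (fst p * snd p)) = 0"
    using False by auto
  show ?thesis unfolding e1 e2 by (rule sums_zero)
next
  case True
  define u where "u = fst p * snd p"
  have u0: "u \<noteq> 0" using True by (simp add: u_def)
  have "(\<lambda>n. (s * - ln u) ^ n /\<^sub>R fact n) sums exp (s * - ln u)" by (rule exp_converges)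
  then have S: "(\<lambda>n. (s * - ln u) ^ n /\<^sub>R fact n * (1/u)) sums (exp (s * - ln u) * (1/u))" by (rule sums_mult2)
  have E1: "(\<lambda>n. (s * - ln u) ^ n /\<^sub>R fact n * (1/u)) = (\<lambda>n. s ^ n / fact n * gg n p)"
  proof
    fix n
    have pm: "(- (s * ln u)) ^ n = s ^ n * (- ln u) ^ n"
      by (metis mult_minus_right power_mult_distrib)
    show "(s * - ln u) ^ n /\<^sub>R fact n * (1/u) = s ^ n / fact n * gg n p"
      using True by (simp add: gg_def u_def[symmetric] pm divide_inverse mult_ac)
  qed
  have E2: "exp (s * - ln u) * (1/u) = indicator T_region p * (u powr (-s) / u)"
    using True u0 by (simp add: powr_def divide_inverse)
  have "(\<lambda>n. s ^ n / fact n * gg n p) sums (indicator T_region p * (u powr (-s) / u))"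
    using S unfolding E1 E2 .
  then show ?thesis unfolding u_def .
qed

lemma powr_div_eq: "0 \<le> (u::real) \<Longrightarrow> u powr (-s) / u = u powr (-(s+1))"
proof (cases "u = 0")
  case False
  assume "0 \<le> u"
  then have "0 < u" using False by simp
  have "u powr (-(s+1)) = u powr (-s) * u powr (-1)"
    by (subst powr_add[symmetric]) simp
  also have "u powr (-1) = inverse u"
    using \<open>0 < u\<close> by (simp add: powr_minus)
  finally show ?thesis by (simp add: divide_inverse)
qed simp

lemma Dfun_eq: "indicator T_region p * ((fst p * snd p) powr (-s) / (fst p * snd p))
   = indicator T_region p * (fst p * snd p) powr (-(s+1))"
  by (cases "p \<in> T_region") (simp_all add: powr_div_eq T_u)

lemma term_le:
  fixes t :: real assumes "0 \<le> t"
  shows "t ^ n / fact n * gg n p \<le> indicator T_region p * (fst p * snd p) powr (-(t+1))"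
proof -
  have s: "(\<lambda>n. t ^ n / fact n * gg n p) sums (indicator T_region p * (fst p * snd p) powr (-(t+1)))"
    using pw_sums[of t p] unfolding Dfun_eq .
  have "sum (\<lambda>n. t ^ n / fact n * gg n p) {n} \<le> (\<Sum>n. t ^ n / fact n * gg n p)"
    by (rule sum_le_suminf[OF sums_summable[OF s]]) (use assms gg_nonneg in auto)
  then show ?thesis using sums_unique[OF s] by simp
qed

lemma gg_meas: "gg n \<in> borel_measurable lborel"
  unfolding gg_def lborel_prod[symmetric] by measurable

lemma gg_integrable: "integrable lborel (gg n)"
proof (rule Bochner_Integration.integrable_bound)
  show "integrable lborel (\<lambda>p. (fact n * 2 ^ n) * (indicator T_region p * (fst p * snd p) powr (-(1/2+1))))"
    by (intro integrable_mult_right T_pow_integrable) auto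
  show "gg n \<in> borel_measurable lborel" by (rule gg_meas)
  show "AE p in lborel. norm (gg n p) \<le> norm ((fact n * 2 ^ n) * (indicator T_region p * (fst p * snd p) powr (-(1/2+1))))"
  proof (rule AE_I2)
    fix p :: "real \<times> real"
    have "(1/2) ^ n / fact n * gg n p \<le> indicator T_region p * (fst p * snd p) powr (-(1/2+1))"
      by (rule term_le) simp
    then have "gg n p \<le> (fact n * 2 ^ n) * (indicator T_region p * (fst p * snd p) powr (-(1/2+1)))"
      by (simp add: field_simps power_divide)
    moreover have "0 \<le> (fact n * 2 ^ n) * (indicator T_region p * (fst p * snd p) powr (-(1/2+1)))"
      by (intro mult_nonneg_nonneg powr_ge_zero) simp_all
    ultimately show "norm (gg n p) \<le> norm ((fact n * 2 ^ n) * (indicator T_region p * (fst p * snd p) powr (-(1/2+1))))"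
      using gg_nonneg[of n p] by simp
  qed
qed

lemma sums_integral_dom:
  fixes h :: "nat \<Rightarrow> real \<times> real \<Rightarrow> real"
  assumes hi: "\<And>n. integrable lborel (h n)" and wi: "integrable lborel w"
    and hs: "\<And>p. (\<lambda>n. h n p) sums S p" and hn: "\<And>p. (\<lambda>n. norm (h n p)) sums w p"
    and Sm: "S \<in> borel_measurable lborel"
  shows "(\<lambda>n. integral\<^sup>L lborel (h n)) sums integral\<^sup>L lborel S"
proof -
  have "(\<lambda>N. integral\<^sup>L lborel (\<lambda>p. \<Sum>n<N. h n p)) \<longlonglongrightarrow> integral\<^sup>L lborel S"
  proof (rule integral_dominated_convergence[where w=w])
    show "S \<in> borel_measurable lborel" by (rule Sm)
    show "\<And>N. (\<lambda>p. \<Sum>n<N. h n p) \<in> borel_measurable lborel"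
      by (intro borel_measurable_sum borel_measurable_integrable hi)
    show "integrable lborel w" by (rule wi)
    show "AE p in lborel. (\<lambda>N. \<Sum>n<N. h n p) \<longlonglongrightarrow> S p"
      using hs by (intro AE_I2) (simp add: sums_def)
    show "\<And>N. AE p in lborel. norm (\<Sum>n<N. h n p) \<le> w p"
    proof (intro AE_I2)
      fix N p
      have "norm (\<Sum>n<N. h n p) \<le> (\<Sum>n<N. norm (h n p))" by (rule norm_sum)
      also have "\<dots> \<le> (\<Sum>n. norm (h n p))"
        by (rule sum_le_suminf[OF sums_summable[OF hn]]) auto
      also have "\<dots> = w p" using hn by (rule sums_unique[symmetric])
      finally show "norm (\<Sum>n<N. h n p) \<le> w p" .
    qed
  qed
  moreover have "\<And>N. integral\<^sup>L lborel (\<lambda>p. \<Sum>n<N. h n p) = (\<Sum>n<N. integral\<^sup>L lborel (h n))"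
    using hi by simp
  ultimately show ?thesis unfolding sums_def by simp
qed

lemma series_sums:
  fixes s :: real assumes s: "\<bar>s\<bar> < 1"
  shows "(\<lambda>n. s ^ n / fact n * I_int n) sums
     integral\<^sup>L lborel (\<lambda>p. indicator T_region p * ((fst p * snd p) powr (-s) / (fst p * snd p)))"
proof -
  have "(\<lambda>n. integral\<^sup>L lborel (\<lambda>p. s ^ n / fact n * gg n p)) sums
     integral\<^sup>L lborel (\<lambda>p. indicator T_region p * ((fst p * snd p) powr (-s) / (fst p * snd p)))"
  proof (rule sums_integral_dom[where w="\<lambda>p. indicator T_region p * (fst p * snd p) powr (-(\<bar>s\<bar>+1))"])
    show "\<And>n. integrable lborel (\<lambda>p. s ^ n / fact n * gg n p)"
      by (intro integrable_mult_right gg_integrable)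
    show "integrable lborel (\<lambda>p. indicator T_region p * (fst p * snd p) powr (-(\<bar>s\<bar>+1)))"
      by (rule T_pow_integrable) (use s in auto)
    show "\<And>p. (\<lambda>n. s ^ n / fact n * gg n p) sums (indicator T_region p * ((fst p * snd p) powr (-s) / (fst p * snd p)))"
      by (rule pw_sums)
    show "\<And>p. (\<lambda>n. norm (s ^ n / fact n * gg n p)) sums (indicator T_region p * (fst p * snd p) powr (-(\<bar>s\<bar>+1)))"
    proof -
      fix p
      have "(\<lambda>n. \<bar>s\<bar> ^ n / fact n * gg n p) sums (indicator T_region p * (fst p * snd p) powr (-(\<bar>s\<bar>+1)))"
        using pw_sums[of "\<bar>s\<bar>" p] unfolding Dfun_eq .
      moreover have "\<And>n. norm (s ^ n / fact n * gg n p) = \<bar>s\<bar> ^ n / fact n * gg n p"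
        using gg_nonneg by (simp add: abs_mult power_abs)
      ultimately show "(\<lambda>n. norm (s ^ n / fact n * gg n p)) sums (indicator T_region p * (fst p * snd p) powr (-(\<bar>s\<bar>+1)))"
        by simp
    qed
    show "(\<lambda>p. indicator T_region p * ((fst p * snd p) powr (-s) / (fst p * snd p))) \<in> borel_measurable lborel"
      unfolding lborel_prod[symmetric] by measurable
  qed
  moreover have "\<And>n. integral\<^sup>L lborel (\<lambda>p. s ^ n / fact n * gg n p) = s ^ n / fact n * I_int n"
    unfolding I_int_gg by (rule integral_mult_right_zero)
  ultimately show ?thesis by (simp only:)
qed

lemma exp_bound:
  fixes L e :: real assumes L: "0 \<le> L" and e: "0 \<le> e" "e \<le> 1/2"
  shows "exp (e*L) - 1 \<le> 2 * e * exp L"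
proof -
  have a: "1 - e*L \<le> exp (-(e*L))" using exp_ge_add_one_self[of "-(e*L)"] by simp
  have "exp (e*L) * (1 - e*L) \<le> exp (e*L) * exp (-(e*L))"
    by (rule mult_left_mono[OF a]) simp
  also have "\<dots> = 1" by (simp add: exp_minus)
  finally have b: "exp (e*L) - 1 \<le> e * L * exp (e*L)" by (simp add: algebra_simps)
  have "L*e \<le> L*(1/2)" by (rule mult_left_mono) (use L e in auto)
  then have "L/2 \<le> (1-e)*L" by (simp add: algebra_simps)
  also have "\<dots> \<le> exp ((1-e)*L)" using exp_ge_add_one_self[of "(1-e)*L"] by linarith
  finally have c: "L \<le> 2 * exp ((1-e)*L)" by simp
  have "e * L * exp (e*L) \<le> e * (2 * exp ((1-e)*L)) * exp (e*L)"
    using c e by (intro mult_right_mono mult_left_mono) auto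
  also have "\<dots> = 2 * e * (exp ((1-e)*L) * exp (e*L))" by simp
  also have "exp ((1-e)*L) * exp (e*L) = exp L" by (simp add: exp_add[symmetric] algebra_simps)
  finally show ?thesis using b by simp
qed

lemma powr_div_exp:
  fixes u t :: real assumes u: "0 < u"
  shows "u powr t / u = exp ((1-t) * (- ln u))"
proof -
  have "u powr t / u = exp (t * ln u) / exp (ln u)" using u by (simp add: powr_def)
  also have "\<dots> = exp (t * ln u - ln u)" by (rule exp_diff[symmetric])
  also have "t * ln u - ln u = (1-t) * (- ln u)" by (simp add: algebra_simps)
  finally show ?thesis .
qed

lemma pw_abel:
  fixes t :: real assumes t: "1/2 \<le> t" "t < 1"
  shows "\<bar>indicator T_region p * ((fst p * snd p) powr t / (fst p * snd p)) - indicator T_region p\<bar>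
     \<le> 2 * (1-t) * gg 0 p + indicator {(0,1),(1,0)} p"
proof (cases "p \<in> T_region")
  case False
  have "0 \<le> 2 * (1-t) * gg 0 p + indicator {(0,1),(1,0)} p"
    using gg_nonneg[of 0 p] t by simp
  then show ?thesis using False by simp
next
  case True
  obtain x y where p: "p = (x,y)" by (cases p)
  from True p have x0: "0 \<le> x" and x1: "x \<le> 1" and y0: "0 \<le> y" and y1: "y \<le> 1" and s: "1 \<le> x + y"
    by (auto simp: T_region_def)
  show ?thesis
  proof (cases "x*y = 0")
    case True
    then have "x = 0 \<or> y = 0" by simp
    then have "p \<in> {(0,1),(1,0)}" using p x1 y1 s by auto
    moreover have "0 \<le> 2 * (1-t) * gg 0 p" using gg_nonneg[of 0 p] t by simp
    moreover have i: "indicator T_region p = (1::real)" using \<open>p \<in> T_region\<close> by simp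
    moreover have q: "(fst p * snd p) powr t / (fst p * snd p) = 0" using p True by simp
    moreover have "\<bar>indicator T_region p * ((fst p * snd p) powr t / (fst p * snd p)) - indicator T_region p\<bar> = 1"
      unfolding i q by simp
    ultimately show ?thesis by simp
  next
    case False
    then have u0: "0 < x*y" using x0 y0 by (simp add: less_le)
    have u1: "x*y \<le> 1" using x0 x1 y0 y1 by (simp add: mult_le_one)
    define L where "L = - ln (x*y)"
    have L0: "0 \<le> L" using u0 u1 by (simp add: L_def)
    have e1: "(x*y) powr t / (x*y) = exp ((1-t) * L)"
      unfolding L_def by (rule powr_div_exp[OF u0])
    have e2: "gg 0 p = exp L"
      using u0 \<open>p \<in> T_region\<close> p by (simp add: gg_def L_def exp_minus divide_inverse)
    have ge: "1 \<le> exp ((1-t) * L)" using L0 t by simp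
    have "exp ((1-t) * L) - 1 \<le> 2 * (1-t) * exp L"
      by (rule exp_bound[OF L0]) (use t in auto)
    moreover have "0 \<le> (indicator {(0,1),(1,0)} p :: real)" by simp
    moreover have "\<bar>indicator T_region p * ((fst p * snd p) powr t / (fst p * snd p)) - indicator T_region p\<bar>
        = exp ((1-t) * L) - 1"
      using \<open>p \<in> T_region\<close> p e1 ge by simp
    moreover have "2 * (1-t) * gg 0 p = 2 * (1-t) * exp L" using e2 by simp
    ultimately show ?thesis by linarith
  qed
qed

lemma T_emeasure: "emeasure lborel T_region = ennreal (1/2)"
proof -
  have "emeasure lborel T_region = (\<integral>\<^sup>+p. indicator T_region p * (\<lambda>_. 1::ennreal) (snd p) \<partial>lborel)"
    by (simp add: nn_integral_indicator)
  also have "\<dots> = (\<integral>\<^sup>+y. indicator {0..1} y * ennreal y * 1 \<partial>lborel)"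
    by (rule T_snd) simp
  also have "\<dots> = (\<integral>\<^sup>+y. indicator {0..1} y * ennreal (y powr 1) \<partial>lborel)"
    by (intro nn_integral_cong) (auto simp: indicator_def)
  also have "\<dots> = ennreal (1 powr (1+1) / (1+1))"
    by (rule nn_powr_01) auto
  finally show ?thesis by simp
qed

lemma Z_null: "emeasure lborel {(0::real,1::real),(1,0)} = 0"
  by (rule emeasure_lborel_countable) simp

lemma G_lower:
  fixes a :: real assumes a: "0 \<le> a" "a < 2"
  shows "(1/2) powr (2-a) / (2-a) \<le> integral\<^sup>L lborel (\<lambda>p. indicator T_region p * (fst p * snd p) powr (-a))"
proof -
  have mf: "(\<lambda>y. indicator {..1/2} y * ennreal (y powr (-a))) \<in> borel_measurable borel" by measurable
  have "ennreal ((1/2) powr (2-a) / (2-a)) = (\<integral>\<^sup>+p. indicator T_region p * (indicator {..1/2} (snd p) * ennreal (snd p powr (-a))) \<partial>lborel)"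
    unfolding T_snd[OF mf] nn_y_pow_half[OF a(2)] ..
  also have "\<dots> \<le> (\<integral>\<^sup>+p. ennreal (indicator T_region p * (fst p * snd p) powr (-a)) \<partial>lborel)"
  proof (rule nn_integral_mono)
    fix p :: "real \<times> real"
    show "indicator T_region p * (indicator {..1/2} (snd p) * ennreal (snd p powr (-a))) \<le> ennreal (indicator T_region p * (fst p * snd p) powr (-a))"
    proof (cases "p \<in> T_region \<and> snd p \<le> 1/2 \<and> snd p \<noteq> 0")
      case True
      obtain x y where p: "p = (x,y)" by (cases p)
      from True p have x1: "x \<le> 1" and y0: "0 < y" and yh: "y \<le> 1/2" and s: "1 \<le> x + y"
        by (auto simp: T_region_def less_le)
      have x0: "0 < x" using s yh by linarith
      have "y powr (-a) \<le> (x*y) powr (-a)"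
        by (rule powr_mono2') (use a x0 y0 x1 in \<open>auto simp: mult_le_cancel_right1\<close>)
      then show ?thesis using True p by (simp add: ennreal_leI)
    next
      case False
      then show ?thesis by (auto simp: indicator_def)
    qed
  qed
  also have "\<dots> = ennreal (integral\<^sup>L lborel (\<lambda>p. indicator T_region p * (fst p * snd p) powr (-a)))"
    by (rule nn_integral_eq_integral[OF T_pow_integrable[OF a]]) simp
  finally show ?thesis by (subst (asm) ennreal_le_iff) (auto intro!: integral_nonneg_AE)
qed

lemma abel_bound:
  fixes t :: real assumes t: "1/2 \<le> t" "t < 1"
  shows "\<bar>integral\<^sup>L lborel (\<lambda>p. indicator T_region p * ((fst p * snd p) powr t / (fst p * snd p))) - 1/2\<bar>
     \<le> 2 * (1-t) * I_int 0"
proof -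
  define f where "f = (\<lambda>p. indicator T_region p * ((fst p * snd p) powr t / (fst p * snd p)))"
  have fe: "f = (\<lambda>p. indicator T_region p * (fst p * snd p) powr (-(1-t)))"
  proof
    fix p
    show "f p = indicator T_region p * (fst p * snd p) powr (-(1-t))"
      using Dfun_eq[of p "-t"] by (simp add: f_def)
  qed
  have fi: "integrable lborel f" unfolding fe by (rule T_pow_integrable) (use t in auto)
  have Tfin: "emeasure lborel T_region < \<infinity>" unfolding T_emeasure by (metis ennreal_less_top infinity_ennreal_def)
  have Ti: "integrable lborel (indicator T_region :: real \<times> real \<Rightarrow> real)"
    by (rule integrable_real_indicator) (use Tfin in auto)
  have Tm: "measure lborel T_region = 1/2"
    unfolding measure_def T_emeasure by (rule enn2real_ennreal) simp
  have TI: "integral\<^sup>L lborel (indicator T_region :: real \<times> real \<Rightarrow> real) = 1/2"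
    using Tm by simp
  have Zs: "{(0::real,1::real),(1,0)} \<in> sets lborel"
    by (simp add: finite_imp_closed)
  have Zi: "integrable lborel (indicator {(0::real,1::real),(1,0)} :: real \<times> real \<Rightarrow> real)"
    by (rule integrable_real_indicator[OF Zs]) (simp add: Z_null)
  have ZI: "integral\<^sup>L lborel (indicator {(0::real,1::real),(1,0)} :: real \<times> real \<Rightarrow> real) = 0"
    using Z_null by (simp add: measure_def)
  have gi: "integrable lborel (\<lambda>p. 2 * (1-t) * gg 0 p + indicator {(0::real,1::real),(1,0)} p)"
    by (intro Bochner_Integration.integrable_add integrable_mult_right gg_integrable Zi)
  have "integral\<^sup>L lborel f - 1/2 = integral\<^sup>L lborel (\<lambda>p. f p - indicator T_region p)"
    using fi Ti TI by simp
  also have "\<bar>\<dots>\<bar> \<le> integral\<^sup>L lborel (\<lambda>p. 2 * (1-t) * gg 0 p + indicator {(0::real,1::real),(1,0)} p)"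
  proof (rule integral_abs_bound_integral)
    show "integrable lborel (\<lambda>p. f p - indicator T_region p)" using fi Ti by simp
    show "integrable lborel (\<lambda>p. 2 * (1-t) * gg 0 p + indicator {(0::real,1::real),(1,0)} p)" by (rule gi)
    show "\<And>p. p \<in> space lborel \<Longrightarrow> \<bar>f p - indicator T_region p\<bar> \<le> 2 * (1-t) * gg 0 p + indicator {(0::real,1::real),(1,0)} p"
      unfolding f_def by (rule pw_abel[OF t])
  qed
  also have "\<dots> = 2 * (1-t) * I_int 0"
    using gg_integrable[of 0] Zi ZI by (simp add: I_int_gg)
  finally show ?thesis unfolding f_def .
qed

lemma I_nonneg: "0 \<le> I_int n"
  unfolding I_int_gg by (intro integral_nonneg_AE AE_I2 gg_nonneg)

lemma term_eq: "(-t) ^ n / fact n * I_int n = (-1) ^ n * I_int n / fact n * (t::real) ^ n"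
  by (subst power_minus) (simp add: divide_inverse mult_ac)

lemma signed_sums:
  fixes t :: real assumes t: "0 < t" "t < 1"
  shows "(\<lambda>n. (-1) ^ n * I_int n / fact n * t ^ n) sums
     integral\<^sup>L lborel (\<lambda>p. indicator T_region p * ((fst p * snd p) powr t / (fst p * snd p)))"
  using series_sums[of "-t"] t unfolding term_eq by simp

lemma not_summable_part: "\<not> summable (\<lambda>n. (-1) ^ n * I_int n / fact n)"
proof
  assume sm: "summable (\<lambda>n. (-1) ^ n * I_int n / fact n)"
  define b where "b n = I_int n / fact n" for n
  have b0: "0 \<le> b n" for n unfolding b_def by (intro divide_nonneg_nonneg I_nonneg) simp
  have "(\<lambda>n. (-1) ^ n * I_int n / fact n) \<longlonglongrightarrow> 0" by (rule summable_LIMSEQ_zero[OF sm])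
  then have "(\<lambda>n. \<bar>(-1) ^ n * I_int n / fact n\<bar>) \<longlonglongrightarrow> 0" by (rule tendsto_rabs_zero)
  moreover have "\<And>n. \<bar>(-1) ^ n * I_int n / fact n\<bar> = b n"
    using I_nonneg by (simp add: b_def abs_mult power_abs)
  ultimately have "b \<longlonglongrightarrow> 0" by simp
  then have "eventually (\<lambda>n. b n < 1/4) sequentially"
    by (rule order_tendstoD(2)) simp
  then obtain N where N: "\<And>n. N \<le> n \<Longrightarrow> b n < 1/4" by (auto simp: eventually_sequentially)
  define C where "C = (\<Sum>n<N. b n)"
  have C0: "0 \<le> C" unfolding C_def by (intro sum_nonneg b0)
  define t where "t = 1 - 1 / (4 * (C + 1))"
  have e: "1 - t = 1 / (4 * (C + 1))" by (simp add: t_def)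
  have t1: "t < 1" using C0 by (simp add: t_def)
  have "1 / (4 * (C + 1)) \<le> 1/4" using C0 by (simp add: field_simps)
  then have th: "3/4 \<le> t" by (simp add: t_def)
  have t0: "0 < t" using th by simp
  have S: "(\<lambda>n. t ^ n / fact n * I_int n) sums
     integral\<^sup>L lborel (\<lambda>p. indicator T_region p * ((fst p * snd p) powr (-t) / (fst p * snd p)))"
    by (rule series_sums) (use t0 t1 in simp)
  have "integral\<^sup>L lborel (\<lambda>p. indicator T_region p * ((fst p * snd p) powr (-t) / (fst p * snd p)))
      = integral\<^sup>L lborel (\<lambda>p. indicator T_region p * (fst p * snd p) powr (-(t+1)))"
    by (simp only: Dfun_eq)
  also have "\<dots> \<ge> (1/2) powr (2-(t+1)) / (2-(t+1))"
    by (rule G_lower) (use t0 t1 in auto)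
  finally have lo: "(1/2) powr (1-t) / (1-t) \<le> (\<Sum>n. t ^ n / fact n * I_int n)"
    using sums_unique[OF S] by simp
  have "(1/2) powr 1 \<le> (1/2::real) powr (1-t)"
    by (rule powr_mono') (use t0 in auto)
  then have "(1/2) / (1-t) \<le> (1/2) powr (1-t) / (1-t)"
    using t1 by (intro divide_right_mono) auto
  with lo have lo2: "(1/2) / (1-t) \<le> (\<Sum>n. t ^ n / fact n * I_int n)" by linarith
  define a where "a n = t ^ n / fact n * I_int n" for n
  have a_eq: "a n = b n * t ^ n" for n by (simp add: a_def b_def)
  have sa: "summable a" using S unfolding a_def[abs_def] by (rule sums_summable)
  have split: "suminf a = (\<Sum>n. a (n + N)) + (\<Sum>n<N. a n)"
    by (rule suminf_split_initial_segment[OF sa])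
  have p1: "(\<Sum>n<N. a n) \<le> C"
    unfolding C_def
  proof (rule sum_mono)
    fix n
    have "t ^ n \<le> 1" using t0 t1 by (intro power_le_one) auto
    then show "a n \<le> b n" unfolding a_eq using b0[of n] by (simp add: mult_left_le)
  qed
  have geo: "(\<lambda>n. 1/4 * t ^ n) sums (1/4 * (1 / (1 - t)))"
    by (intro sums_mult geometric_sums) (use t0 t1 in simp)
  have p2: "(\<Sum>n. a (n + N)) \<le> 1/4 * (1 / (1 - t))"
  proof -
    have "(\<Sum>n. a (n + N)) \<le> (\<Sum>n. 1/4 * t ^ n)"
    proof (rule suminf_le)
      fix n
      have "t ^ (n + N) \<le> t ^ n" using t0 t1 by (intro power_decreasing) auto
      moreover have "b (n + N) \<le> 1/4" using N[of "n+N"] by simp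
      ultimately show "a (n + N) \<le> 1/4 * t ^ n"
        unfolding a_eq using b0[of "n+N"] t0 by (intro mult_mono) auto
      show "summable (\<lambda>n. a (n + N))" using sa by (rule summable_ignore_initial_segment)
      show "summable (\<lambda>n. 1/4 * t ^ n)" using geo by (rule sums_summable)
    qed
    also have "\<dots> = 1/4 * (1 / (1 - t))" using geo by (rule sums_unique[symmetric])
    finally show ?thesis .
  qed
  have "(1/2) / (1-t) \<le> C + 1/4 * (1 / (1 - t))"
    using lo2 split p1 p2 unfolding a_def by linarith
  moreover have "(1/2) / (1-t) = 2 * (C + 1)" "1/4 * (1 / (1 - t)) = C + 1"
    unfolding e using C0 by (simp_all add: field_simps)
  ultimately show False by linarith
qed


theorem corollary5:
  shows "\<not> summable (\<lambda>n. (-1) ^ n * I_int n / fact n) \<and>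
    (\<forall>t\<in>{0<..<1::real}. summable (\<lambda>n. (-1) ^ n * I_int n / fact n * t ^ n)) \<and>
    ((\<lambda>t. \<Sum>n. (-1) ^ n * I_int n / fact n * t ^ n) \<longlongrightarrow> 1/2) (at_left (1::real))"
proof (intro conjI ballI)
  show "\<not> summable (\<lambda>n. (-1) ^ n * I_int n / fact n)" by (rule not_summable_part)
next
  fix t :: real assume "t \<in> {0<..<1}"
  then show "summable (\<lambda>n. (-1) ^ n * I_int n / fact n * t ^ n)"
    using signed_sums[of t] by (auto intro: sums_summable)
next
  define F where "F t = (\<Sum>n. (-1) ^ n * I_int n / fact n * t ^ n)" for t :: real
  have ev: "eventually (\<lambda>t. norm (F t - 1/2) \<le> 2 * (1-t) * I_int 0) (at_left (1::real))"
    using eventually_at_left_real[of "1/2" "1::real"]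
  proof (rule eventually_mono)
    show "1/2 < (1::real)" by simp
  next
    fix t :: real assume "t \<in> {1/2<..<1}"
    then have t: "1/2 \<le> t" "t < 1" "0 < t" by auto
    have "F t = integral\<^sup>L lborel (\<lambda>p. indicator T_region p * ((fst p * snd p) powr t / (fst p * snd p)))"
      unfolding F_def by (rule sums_unique[OF signed_sums[OF t(3) t(2)], symmetric])
    then show "norm (F t - 1/2) \<le> 2 * (1-t) * I_int 0"
      using abel_bound[OF t(1) t(2)] by simp
  qed
  have "((\<lambda>t. 2 * (1-t) * I_int 0) \<longlongrightarrow> 2 * (1-1) * I_int 0) (at_left (1::real))"
    by (intro tendsto_intros)
  then have "((\<lambda>t. 2 * (1-t) * I_int 0) \<longlongrightarrow> 0) (at_left (1::real))" by simp
  with ev have "((\<lambda>t. F t - 1/2) \<longlongrightarrow> 0) (at_left (1::real))"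
    by (rule Lim_null_comparison)
  then have "(F \<longlongrightarrow> 1/2) (at_left (1::real))" by (rule LIM_zero_cancel)
  then show "((\<lambda>t. \<Sum>n. (-1) ^ n * I_int n / fact n * t ^ n) \<longlongrightarrow> 1/2) (at_left (1::real))"
    unfolding F_def .
qed

end
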